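(* Under the standing assumptions below, $\sum_{i=1}^\infty\frac{a_i\pi_i}{a_i+a_j}=1$ for every $j\in\mathbb{N}$.
   Context: Standing assumptions: $X$ is one of $\ell^p$ ($1\le p\le\infty$), $c$, $c_0$; $(a_n)$ strictly decreasing positive reals, $a_n\to0$; $b=(b_n)\in X$ with $b_n>0$; $\pi_n:=2\prod_{m\ge1,\,m\ne n}\frac{1+a_m/a_n}{1-a_m/a_n}$ with $\pi\in\ell^\infty$; $\phi_{ij}:=\frac{b_i/b_j}{1+a_i/a_j}$ satisfies $\phi_{ij}\le C\mu^{|i-j|}$ for some $C>0$, $\mu\in(0,1)$. *)

theory Defs
  imports "HOL-Analysis.Analysis"
begin

text \<open>The sequence spaces X: l^p (1 <= p < infinity), l^infinity, c, c_0.
  Sequences are indexed from 0 (the paper indexes from 1).\<close>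

datatype seq_space = Lp real | Linf | Cconv | Czero

fun in_seq_space :: "seq_space \<Rightarrow> (nat \<Rightarrow> real) \<Rightarrow> bool" where
  "in_seq_space (Lp p) x = summable (\<lambda>n. \<bar>x n\<bar> powr p)"
| "in_seq_space Linf x = Bseq x"
| "in_seq_space Cconv x = convergent x"
| "in_seq_space Czero x = (x \<longlonglongrightarrow> 0)"

fun valid_space :: "seq_space \<Rightarrow> bool" where
  "valid_space (Lp p) = (1 \<le> p)"
| "valid_space _ = True"

definition pi_factor :: "(nat \<Rightarrow> real) \<Rightarrow> nat \<Rightarrow> nat \<Rightarrow> real" where
  "pi_factor a n m = (if m = n then 1 else (1 + a m / a n) / (1 - a m / a n))"

definition pi_seq :: "(nat \<Rightarrow> real) \<Rightarrow> nat \<Rightarrow> real" where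
  "pi_seq a n = 2 * prodinf (pi_factor a n)"

definition phi :: "(nat \<Rightarrow> real) \<Rightarrow> (nat \<Rightarrow> real) \<Rightarrow> nat \<Rightarrow> nat \<Rightarrow> real" where
  "phi a b i j = (b i / b j) / (1 + a i / a j)"

end

theory Submission
  imports Defs
begin

lemma pf_step:
  fixes c x y z :: real
  assumes "z \<noteq> x" "z \<noteq> y" "x \<noteq> y"
  shows "c/(z-x)*((z+y)/(z-y)) = c*((x+y)/(x-y))/(z-x) + 2*y*(c/(y-x))/(z-y)"
proof -
  have a: "z - x \<noteq> 0" "z - y \<noteq> 0" "x - y \<noteq> 0" "y - x \<noteq> 0" using assms by auto
  have "(z+y)/((z-x)*(z-y)) = (x+y)/((x-y)*(z-x)) + 2*y/((y-x)*(z-y))"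
    using a by (simp add: divide_simps) (simp add: algebra_simps)
  then have "c * ((z+y)/((z-x)*(z-y))) = c * ((x+y)/((x-y)*(z-x)) + 2*y/((y-x)*(z-y)))" by simp
  then show ?thesis by (simp add: algebra_simps)
qed
lemma dist_step:
  fixes c :: "nat \<Rightarrow> real" and d e :: "nat \<Rightarrow> real"
  shows "(1 + 2*y/w) + (\<Sum>i<N. d i + 2 * y * (c i / e i) / w)
    = 1 + ((\<Sum>i<N. d i) + 2 * y * (1 + (\<Sum>i<N. c i / e i)) / w)"
proof -
  have "(\<Sum>i<N. d i + 2 * y * (c i / e i) / w) = (\<Sum>i<N. d i) + 2 * y * (\<Sum>i<N. c i / e i) / w"
  proof -
    have "(\<Sum>i<N. 2 * y * (c i / e i) / w) = (\<Sum>i<N. (2 * y / w) * (c i / e i))" by (simp add: mult.commute)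
    also have "\<dots> = (2 * y / w) * (\<Sum>i<N. c i / e i)" by (rule sum_distrib_left[symmetric])
    finally show ?thesis by (simp add: sum.distrib)
  qed
  moreover have "2 * y * (1 + (\<Sum>i<N. c i / e i)) / w = 2*y/w + 2 * y * (\<Sum>i<N. c i / e i) / w"
    by (simp add: distrib_left add_divide_distrib)
  ultimately show ?thesis by simp
qed

lemma pf_identity:
  fixes x :: "nat \<Rightarrow> real"
  assumes inj: "inj x"
  shows "(\<forall>i<N. z \<noteq> x i) \<Longrightarrow> (\<Prod>m<N. (z + x m)/(z - x m)) =
     1 + (\<Sum>i<N. 2 * x i * (\<Prod>m\<in>{..<N}-{i}. (x i + x m)/(x i - x m)) / (z - x i))"
proof (induction N arbitrary: z)
  case 0
  then show ?case by simp
next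
  case (Suc N)
  define y where "y = x N"
  define c where "c i = 2 * x i * (\<Prod>m\<in>{..<N}-{i}. (x i + x m)/(x i - x m))" for i
  have zy: "z \<noteq> y" using Suc.prems y_def by auto
  have zx: "\<And>i. i < N \<Longrightarrow> z \<noteq> x i" using Suc.prems by auto
  have xy: "\<And>i. i < N \<Longrightarrow> x i \<noteq> y" using inj y_def by (metis inj_eq less_irrefl)
  have IHz: "(\<Prod>m<N. (z + x m)/(z - x m)) = 1 + (\<Sum>i<N. c i / (z - x i))"
    unfolding c_def using Suc.IH[of z] zx by blast
  have IHy: "(\<Prod>m<N. (y + x m)/(y - x m)) = 1 + (\<Sum>i<N. c i / (y - x i))"
  proof -
    have "\<forall>i<N. y \<noteq> x i" using xy by fastforce
    then show ?thesis unfolding c_def by (rule Suc.IH)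
  qed
  have P1: "(\<Prod>m\<in>{..<Suc N}-{i}. (x i + x m)/(x i - x m)) =
      (\<Prod>m\<in>{..<N}-{i}. (x i + x m)/(x i - x m)) * ((x i + y)/(x i - y))" if "i < N" for i
  proof -
    have "{..<Suc N}-{i} = insert N ({..<N}-{i})" using that by auto
    then show ?thesis using y_def by (simp add: mult.commute)
  qed
  have P2: "(\<Prod>m\<in>{..<Suc N}-{N}. (y + x m)/(y - x m)) = 1 + (\<Sum>i<N. c i / (y - x i))"
  proof -
    have "{..<Suc N}-{N} = {..<N}" by auto
    then show ?thesis using IHy by simp
  qed
  have "(\<Prod>m<Suc N. (z + x m)/(z - x m)) = (1 + (\<Sum>i<N. c i / (z - x i))) * ((z+y)/(z-y))"
    using IHz y_def by simp
  also have "\<dots> = (z+y)/(z-y) + (\<Sum>i<N. c i / (z - x i) * ((z+y)/(z-y)))"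
    by (simp only: distrib_right sum_distrib_right mult_1_left)
  also have "\<dots> = (1 + 2*y/(z-y)) + (\<Sum>i<N. c i * ((x i + y)/(x i - y)) / (z - x i)
                    + 2 * y * (c i / (y - x i)) / (z - y))"
  proof -
    have "(z+y)/(z-y) = 1 + 2*y/(z-y)" using zy by (simp add: divide_simps)
    moreover have "c i / (z - x i) * ((z+y)/(z-y)) = c i * ((x i + y)/(x i - y)) / (z - x i)
                    + 2 * y * (c i / (y - x i)) / (z - y)" if "i < N" for i
      using pf_step zx[OF that] zy xy[OF that] by blast
    ultimately show ?thesis by (metis (no_types, lifting) lessThan_iff sum.cong)
  qed
  also have "\<dots> = 1 + ((\<Sum>i<N. c i * ((x i + y)/(x i - y)) / (z - x i))
                    + 2 * y * (1 + (\<Sum>i<N. c i / (y - x i))) / (z - y))"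
    by (rule dist_step)
  also have "\<dots> = 1 + (\<Sum>i<Suc N. 2 * x i * (\<Prod>m\<in>{..<Suc N}-{i}. (x i + x m)/(x i - x m)) / (z - x i))"
  proof -
    have "(\<Sum>i<Suc N. 2 * x i * (\<Prod>m\<in>{..<Suc N}-{i}. (x i + x m)/(x i - x m)) / (z - x i))
       = (\<Sum>i<N. 2 * x i * (\<Prod>m\<in>{..<Suc N}-{i}. (x i + x m)/(x i - x m)) / (z - x i))
         + 2 * x N * (\<Prod>m\<in>{..<Suc N}-{N}. (x N + x m)/(x N - x m)) / (z - x N)"
      by (rule sum.lessThan_Suc)
    also have "(\<Sum>i<N. 2 * x i * (\<Prod>m\<in>{..<Suc N}-{i}. (x i + x m)/(x i - x m)) / (z - x i))
       = (\<Sum>i<N. c i * ((x i + y)/(x i - y)) / (z - x i))"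
    proof (rule sum.cong)
      fix i assume "i \<in> {..<N}"
      then show "2 * x i * (\<Prod>m\<in>{..<Suc N}-{i}. (x i + x m)/(x i - x m)) / (z - x i)
         = c i * ((x i + y)/(x i - y)) / (z - x i)"
        using P1[of i] unfolding c_def by (simp add: mult.assoc)
    qed simp
    also have "2 * x N * (\<Prod>m\<in>{..<Suc N}-{N}. (x N + x m)/(x N - x m)) / (z - x N)
       = 2 * y * (1 + (\<Sum>i<N. c i / (y - x i))) / (z - y)"
      unfolding y_def[symmetric] P2 ..
    finally show ?thesis by simp
  qed
  finally show ?case .
qed

lemma antimono_a:
  fixes a :: "nat \<Rightarrow> real"
  assumes "\<And>n. a (Suc n) < a n"
  shows "m < n \<Longrightarrow> a n < a m"
proof (induction n)
  case 0 then show ?case by simp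
next
  case (Suc n)
  then show ?case using assms[of n] by (cases "m = n") auto
qed

lemma abs_pi_factor_ge1:
  fixes a :: "nat \<Rightarrow> real"
  assumes "\<And>n. a n > 0" "inj a"
  shows "1 \<le> \<bar>pi_factor a i m\<bar>"
proof (cases "m = i")
  case True then show ?thesis by (simp add: pi_factor_def)
next
  case False
  define r where "r = a m / a i"
  have r0: "r > 0" using assms(1) r_def by simp
  have "a m \<noteq> a i" using False assms(2) by (auto dest: injD)
  then have r1: "r \<noteq> 1" using assms(1)[of i] r_def by auto
  have "pi_factor a i m = (1 + r) / (1 - r)" using False r_def by (simp add: pi_factor_def)
  moreover have "\<bar>1 - r\<bar> \<le> \<bar>1 + r\<bar>" using r0 by linarith
  moreover have "\<bar>1 - r\<bar> > 0" using r1 by simp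
  ultimately show ?thesis by (simp add: abs_divide le_divide_eq)
qed
lemma prod_eq_pi_factor:
  fixes a :: "nat \<Rightarrow> real"
  assumes "\<And>n. a n > 0"
  shows "(\<Prod>m\<in>{..<N}-{i}. (a i + a m)/(a i - a m)) = (\<Prod>m<N. pi_factor a i m)"
proof -
  have "(\<Prod>m<N. pi_factor a i m) = (\<Prod>m\<in>{..<N}-{i}. pi_factor a i m)"
    by (rule prod.mono_neutral_right) (auto simp: pi_factor_def)
  also have "\<dots> = (\<Prod>m\<in>{..<N}-{i}. (a i + a m)/(a i - a m))"
  proof (rule prod.cong)
    fix m assume "m \<in> {..<N}-{i}"
    then have "m \<noteq> i" by auto
    have ai: "a i > 0" using assms by simp
    then show "pi_factor a i m = (a i + a m)/(a i - a m)"
      using \<open>m \<noteq> i\<close> by (simp add: pi_factor_def divide_simps)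
  qed simp
  finally show ?thesis by simp
qed

theorem mainTheorem13:
  fixes X :: seq_space and a b :: "nat \<Rightarrow> real"
  assumes X: "valid_space X"
    and a_pos: "\<And>n. a n > 0"
    and a_dec: "\<And>n. a (Suc n) < a n"
    and a_lim: "a \<longlonglongrightarrow> 0"
    and b_X: "in_seq_space X b"
    and b_pos: "\<And>n. b n > 0"
    and pi_conv: "\<And>n. convergent_prod (pi_factor a n)"
    and pi_bdd: "Bseq (pi_seq a)"
    and phi_bd: "\<exists>C > 0. \<exists>\<mu>. 0 < \<mu> \<and> \<mu> < 1 \<and>
                   (\<forall>i j. phi a b i j \<le> C * \<mu> ^ (max i j - min i j))"
  shows "\<forall>j. (\<lambda>i. a i * pi_seq a i / (a i + a j)) sums 1"
proof
  fix j
  have lt: "m < n \<Longrightarrow> a n < a m" for m n using antimono_a[of a, OF a_dec] by blast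
  have inj: "inj a"
  proof (rule injI)
    fix m n assume "a m = a n"
    then show "m = n" using lt[of m n] lt[of n m] by (metis linorder_neqE_nat less_irrefl)
  qed
  define P where "P n i = 2 * (\<Prod>m<n. pi_factor a i m)" for n i
  have fin: "(\<Sum>i<N. a i * P N i / (a i + a j)) = 1" if "j < N" for N
  proof -
    have "\<forall>i<N. - a j \<noteq> a i"
    proof (intro allI impI)
      fix i show "- a j \<noteq> a i" using a_pos[of i] a_pos[of j] by linarith
    qed
    from pf_identity[OF inj this]
    have eq: "(\<Prod>m<N. (- a j + a m)/(- a j - a m)) =
      1 + (\<Sum>i<N. 2 * a i * (\<Prod>m\<in>{..<N}-{i}. (a i + a m)/(a i - a m)) / (- a j - a i))" .
    have "(\<Prod>m<N. (- a j + a m)/(- a j - a m)) = 0"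
      using that by (intro prod_zero) auto
    with eq have "(\<Sum>i<N. 2 * a i * (\<Prod>m\<in>{..<N}-{i}. (a i + a m)/(a i - a m)) / (- a j - a i)) = -1"
      by linarith
    moreover have "(\<Sum>i<N. 2 * a i * (\<Prod>m\<in>{..<N}-{i}. (a i + a m)/(a i - a m)) / (- a j - a i))
        = - (\<Sum>i<N. a i * P N i / (a i + a j))"
      unfolding sum_negf[symmetric]
    proof (rule sum.cong)
      fix i assume "i \<in> {..<N}"
      have d: "- a j - a i = - (a i + a j)" by simp
      have q: "(\<Prod>m\<in>{..<N}-{i}. (a i + a m)/(a i - a m)) = (\<Prod>m<N. pi_factor a i m)"
        by (rule prod_eq_pi_factor[OF a_pos])
      show "2 * a i * (\<Prod>m\<in>{..<N}-{i}. (a i + a m)/(a i - a m)) / (- a j - a i) =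
           - (a i * P N i / (a i + a j))"
        unfolding P_def q d divide_minus_right by simp
    qed simp
    ultimately show ?thesis by linarith
  qed
  have sa: "summable a"
  proof -
    have ge: "pi_factor a 0 m \<ge> 1" for m
    proof (cases "m = 0")
      case True then show ?thesis by (simp add: pi_factor_def)
    next
      case False
      have "a m < a 0" using lt False by simp
      then have "a m / a 0 < 1" using a_pos[of 0] by simp
      moreover have "a m / a 0 > 0" using a_pos by simp
      ultimately show ?thesis using False by (simp add: pi_factor_def)
    qed
    have "abs_convergent_prod (pi_factor a 0)"
      unfolding abs_convergent_prod_def using pi_conv[of 0] ge by simp
    from abs_convergent_prod_imp_summable[OF this]
    have s: "summable (\<lambda>m. \<bar>pi_factor a 0 m - 1\<bar>)" by simp
    show ?thesis
    proof (rule summable_comparison_test_ev[OF _ summable_mult[OF s, of "a 0 / 2"]])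
      show "eventually (\<lambda>m. norm (a m) \<le> a 0 / 2 * \<bar>pi_factor a 0 m - 1\<bar>) sequentially"
        using eventually_gt_at_top[of 0]
      proof eventually_elim
        case (elim m)
        have am: "a m < a 0" "a m > 0" "a 0 > 0" using lt elim a_pos by auto
        have "pi_factor a 0 m - 1 = 2 * a m / (a 0 - a m)"
          using elim am by (simp add: pi_factor_def field_simps)
        moreover have "a m \<le> a 0 / 2 * (2 * a m / (a 0 - a m))"
          using am by (simp add: field_simps mult_left_mono)
        ultimately show ?case using am by simp
      qed
    qed
  qed
  obtain B where B: "B > 0" "\<And>n. norm (pi_seq a n) \<le> B" using pi_bdd by (auto simp: Bseq_def)
  have Pbd: "\<bar>P n i\<bar> \<le> B" for n i
  proof -
    let ?Q = "\<lambda>n. \<bar>\<Prod>m<n. pi_factor a i m\<bar>"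
    have inc: "incseq ?Q"
    proof (rule incseq_SucI)
      fix n
      have "?Q n * 1 \<le> ?Q n * \<bar>pi_factor a i n\<bar>"
        using abs_pi_factor_ge1[OF a_pos inj] by (intro mult_left_mono) auto
      then show "?Q n \<le> ?Q (Suc n)" by (simp add: abs_mult)
    qed
    have "(\<lambda>n. \<Prod>m\<le>n. pi_factor a i m) \<longlonglongrightarrow> prodinf (pi_factor a i)"
      by (rule convergent_prod_LIMSEQ[OF pi_conv])
    then have "(\<lambda>n. \<Prod>m<Suc n. pi_factor a i m) \<longlonglongrightarrow> prodinf (pi_factor a i)"
      by (simp add: lessThan_Suc_atMost)
    then have "(\<lambda>n. \<Prod>m<n. pi_factor a i m) \<longlonglongrightarrow> prodinf (pi_factor a i)"
      by (rule LIMSEQ_imp_Suc)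
    then have "?Q \<longlonglongrightarrow> \<bar>prodinf (pi_factor a i)\<bar>" by (rule tendsto_rabs)
    from incseq_le[OF inc this] have "?Q n \<le> \<bar>prodinf (pi_factor a i)\<bar>" .
    then have "\<bar>P n i\<bar> \<le> \<bar>pi_seq a i\<bar>" by (simp add: P_def pi_seq_def abs_mult)
    then show ?thesis using B(2)[of i] by simp
  qed
  have Plim: "(\<lambda>n. P n i) \<longlonglongrightarrow> pi_seq a i" for i
  proof -
    have "(\<lambda>n. \<Prod>m\<le>n. pi_factor a i m) \<longlonglongrightarrow> prodinf (pi_factor a i)"
      by (rule convergent_prod_LIMSEQ[OF pi_conv])
    then have "(\<lambda>n. \<Prod>m<Suc n. pi_factor a i m) \<longlonglongrightarrow> prodinf (pi_factor a i)"
      by (simp add: lessThan_Suc_atMost)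
    then have "(\<lambda>n. \<Prod>m<n. pi_factor a i m) \<longlonglongrightarrow> prodinf (pi_factor a i)"
      by (rule LIMSEQ_imp_Suc)
    then show ?thesis unfolding P_def pi_seq_def by (intro tendsto_mult tendsto_const)
  qed
  define f where "f k n = (if k < n then a k * P n k / (a k + a j) else 0)" for k n
  define g where "g k = a k * pi_seq a k / (a k + a j)" for k
  define M where "M k = B / a j * a k" for k
  have T: "eventually (\<lambda>n. summable (\<lambda>k. norm (f k n))) sequentially \<and>
           summable (\<lambda>n. norm (g n)) \<and>
           ((\<lambda>n. suminf (\<lambda>k. f k n)) \<longlongrightarrow> suminf g) sequentially"
  proof (rule tannerys_theorem)
    fix k
    show "(\<lambda>n. f k n) \<longlonglongrightarrow> g k"
    proof (rule Lim_transform_eventually)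
      show "(\<lambda>n. a k * P n k / (a k + a j)) \<longlonglongrightarrow> g k"
        unfolding g_def using a_pos[of k] a_pos[of j] by (intro tendsto_intros Plim) auto
      show "eventually (\<lambda>n. a k * P n k / (a k + a j) = f k n) sequentially"
        using eventually_gt_at_top[of k] by eventually_elim (simp add: f_def)
    qed
  next
    show "eventually (\<lambda>(k,n). norm (f k n) \<le> M k) (at_top \<times>\<^sub>F sequentially)"
    proof (rule always_eventually, clarify)
      fix k n
      have ak: "a k > 0" "a j > 0" using a_pos by auto
      have "\<bar>a k * P n k / (a k + a j)\<bar> = a k * \<bar>P n k\<bar> / (a k + a j)"
        using ak by (simp add: abs_mult abs_divide)
      also have "\<dots> \<le> a k * B / (a k + a j)"
        using ak Pbd[of n k] by (intro divide_right_mono mult_left_mono) auto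
      also have "\<dots> \<le> a k * B / a j"
        using ak B by (intro divide_left_mono) auto
      finally show "norm (f k n) \<le> M k" using ak B by (auto simp: f_def M_def mult.commute)
    qed
  next
    show "summable M" unfolding M_def by (intro summable_mult sa)
  qed simp
  have "eventually (\<lambda>n. suminf (\<lambda>k. f k n) = 1) sequentially"
    using eventually_gt_at_top[of j]
  proof eventually_elim
    case (elim n)
    have "suminf (\<lambda>k. f k n) = (\<Sum>k<n. f k n)"
      by (rule suminf_finite) (auto simp: f_def)
    also have "\<dots> = (\<Sum>k<n. a k * P n k / (a k + a j))"
      by (rule sum.cong) (auto simp: f_def)
    finally show ?case using fin[OF elim] by simp
  qed
  then have "((\<lambda>n. suminf (\<lambda>k. f k n)) \<longlongrightarrow> 1) sequentially"
    by (rule tendsto_eventually) 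
  with T have "suminf g = 1" using LIMSEQ_unique by blast
  moreover have "summable g" using T summable_norm_cancel by blast
  ultimately show "(\<lambda>i. a i * pi_seq a i / (a i + a j)) sums 1"
    using summable_sums[of g] unfolding g_def[abs_def] by simp
qed

end
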